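(* Let $\mathfrak{A}$ be a unital $\mathrm{C}^*$-algebra and $\mathfrak{S}\subset\mathfrak{A}$ an operator system. Let $\pi:\mathfrak{A}\to B(\mathcal{H})$ be a unital $*$-representation and $\Pi:\mathfrak{A}\to B(\mathcal{H})$ a unital completely positive map with $\Pi|_{\mathfrak{S}}=\pi|_{\mathfrak{S}}$. Let $\psi$ be a state on $\mathfrak{A}$ admitting a characteristic sequence $(\Delta_n)_n$ with $\Delta_n\in\mathfrak{S}$ for all $n$. Then for every $a\in\mathfrak{A}$, \[\limsup_{n\to\infty}\|(\Pi(a)-\pi(a))\pi(\Delta_n)\|\le 2\operatorname{dist}(\sigma_\psi(a),\sigma_\psi(\mathfrak{S}))\] and \[\lim_{n\to\infty}\|\pi(\Delta_n)^*(\Pi(a)-\pi(a))\pi(\Delta_n)\|=0.\]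
   Context: An operator system is a unital self-adjoint subspace of $\mathfrak{A}$. $\sigma_\psi$ denotes the GNS representation of the state $\psi$. A sequence $(\Delta_n)_n$ in $\mathfrak{A}$ is a characteristic sequence for $\psi$ if (a) $\|\Delta_n\|=1$ for all $n$, (b) $\lim_{n\to\infty}\psi(\Delta_n)=1$, and (c) $\limsup_{n\to\infty}\|\Delta_n^*a\Delta_n\|\le|\psi(a)|$ for every $a\in\mathfrak{A}$. *)

theory Defs
  imports "HOL-Analysis.Analysis" "HOL-Library.Liminf_Limsup"
begin

class cvector = ab_group_add +
  fixes scaleC :: "complex \<Rightarrow> 'a \<Rightarrow> 'a" (infixr "*\<^sub>C" 75)
  assumes scaleC_add_right: "c *\<^sub>C (x + y) = c *\<^sub>C x + c *\<^sub>C y"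
    and scaleC_add_left: "(c + d) *\<^sub>C x = c *\<^sub>C x + d *\<^sub>C x"
    and scaleC_scaleC: "c *\<^sub>C (d *\<^sub>C x) = (c * d) *\<^sub>C x"
    and scaleC_one: "1 *\<^sub>C x = x"

class chilbert = cvector + real_normed_vector + complete_space +
  fixes cinner :: "'a \<Rightarrow> 'a \<Rightarrow> complex"
  assumes chilbert_scaleR_scaleC: "scaleR r x = complex_of_real r *\<^sub>C x"
    and cinner_add_left: "cinner (x + y) z = cinner x z + cinner y z"
    and cinner_scaleC_left: "cinner (c *\<^sub>C x) y = cnj c * cinner x y"
    and cinner_commute: "cinner y x = cnj (cinner x y)"
    and cinner_pos: "Im (cinner x x) = 0 \<and> Re (cinner x x) \<ge> 0"
    and cinner_zero_iff: "cinner x x = 0 \<longleftrightarrow> x = 0"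
    and norm_cinner: "norm x = sqrt (Re (cinner x x))"

class cstar_algebra = cvector + real_normed_algebra_1 + banach +
  fixes cstar :: "'a \<Rightarrow> 'a"
  assumes cstar_scaleR_scaleC: "scaleR r x = complex_of_real r *\<^sub>C x"
    and scaleC_mult_left: "(c *\<^sub>C x) * y = c *\<^sub>C (x * y)"
    and scaleC_mult_right: "x * (c *\<^sub>C y) = c *\<^sub>C (x * y)"
    and cstar_cstar: "cstar (cstar x) = x"
    and cstar_add: "cstar (x + y) = cstar x + cstar y"
    and cstar_scaleC: "cstar (c *\<^sub>C x) = cnj c *\<^sub>C cstar x"
    and cstar_mult: "cstar (x * y) = cstar y * cstar x"
    and cstar_identity: "norm (cstar x * x) = (norm x)\<^sup>2"

definition operator_system :: "'a::cstar_algebra set \<Rightarrow> bool" where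
  "operator_system S \<longleftrightarrow> 1 \<in> S \<and> 0 \<in> S
     \<and> (\<forall>x\<in>S. \<forall>y\<in>S. x + y \<in> S)
     \<and> (\<forall>c. \<forall>x\<in>S. c *\<^sub>C x \<in> S)
     \<and> (\<forall>x\<in>S. cstar x \<in> S)"

text \<open>Positive elements of a C*-algebra are exactly those of the form b* b.\<close>
definition is_state :: "('a::cstar_algebra \<Rightarrow> complex) \<Rightarrow> bool" where
  "is_state \<psi> \<longleftrightarrow> (\<forall>x y. \<psi> (x + y) = \<psi> x + \<psi> y)
     \<and> (\<forall>c x. \<psi> (c *\<^sub>C x) = c * \<psi> x)
     \<and> (\<forall>b. Im (\<psi> (cstar b * b)) = 0 \<and> Re (\<psi> (cstar b * b)) \<ge> 0)
     \<and> \<psi> 1 = 1"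

definition bounded_op :: "('h::chilbert \<Rightarrow> 'h) \<Rightarrow> bool" where
  "bounded_op T \<longleftrightarrow> (\<forall>x y. T (x + y) = T x + T y) \<and> (\<forall>c x. T (c *\<^sub>C x) = c *\<^sub>C T x)
     \<and> (\<exists>K. \<forall>x. norm (T x) \<le> K * norm x)"

definition opnorm :: "('h::chilbert \<Rightarrow> 'h) \<Rightarrow> real" where
  "opnorm T = (SUP x\<in>{x. norm x \<le> 1}. norm (T x))"

definition linear_map_BH :: "('a::cstar_algebra \<Rightarrow> 'h::chilbert \<Rightarrow> 'h) \<Rightarrow> bool" where
  "linear_map_BH \<Phi> \<longleftrightarrow> (\<forall>a. bounded_op (\<Phi> a))
     \<and> (\<forall>a b h. \<Phi> (a + b) h = \<Phi> a h + \<Phi> b h)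
     \<and> (\<forall>c a h. \<Phi> (c *\<^sub>C a) h = c *\<^sub>C \<Phi> a h)"

definition unital_star_rep :: "('a::cstar_algebra \<Rightarrow> 'h::chilbert \<Rightarrow> 'h) \<Rightarrow> bool" where
  "unital_star_rep \<pi> \<longleftrightarrow> linear_map_BH \<pi>
     \<and> (\<forall>a b h. \<pi> (a * b) h = \<pi> a (\<pi> b h))
     \<and> (\<forall>h. \<pi> 1 h = h)
     \<and> (\<forall>a h k. cinner (\<pi> (cstar a) h) k = cinner h (\<pi> a k))"

text \<open>Complete positivity: for every n, the amplification \<Phi>_n maps positive matrices
  of M_n(A) (i.e. matrices of the form Y* Y, with entries sum_k y_ki* y_kj) to positive
  operators on H^n (i.e. sum_ij <h_i, \<Phi>(x_ij) h_j> \<ge> 0).\<close>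
definition completely_positive :: "('a::cstar_algebra \<Rightarrow> 'h::chilbert \<Rightarrow> 'h) \<Rightarrow> bool" where
  "completely_positive \<Phi> \<longleftrightarrow> (\<forall>(n::nat) (Y::nat \<Rightarrow> nat \<Rightarrow> 'a) (h::nat \<Rightarrow> 'h).
     let s = (\<Sum>i<n. \<Sum>j<n. cinner (h i) (\<Phi> (\<Sum>k<n. cstar (Y k i) * Y k j) (h j)))
     in Im s = 0 \<and> Re s \<ge> 0)"

definition ucp_map :: "('a::cstar_algebra \<Rightarrow> 'h::chilbert \<Rightarrow> 'h) \<Rightarrow> bool" where
  "ucp_map \<Phi> \<longleftrightarrow> linear_map_BH \<Phi> \<and> completely_positive \<Phi> \<and> (\<forall>h. \<Phi> 1 h = h)"

text \<open>Norm of the GNS operator \<sigma>_\<psi>(x): the operator norm on the dense subspace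
  A/N_\<psi> of H_\<psi>, where [b] has squared norm \<psi>(b* b) and \<sigma>_\<psi>(x)[b] = [x b].\<close>
definition gns_norm :: "('a::cstar_algebra \<Rightarrow> complex) \<Rightarrow> 'a \<Rightarrow> real" where
  "gns_norm \<psi> x = (SUP b\<in>{b. Re (\<psi> (cstar b * b)) \<le> 1}.
       sqrt (Re (\<psi> (cstar (x * b) * (x * b)))))"

text \<open>dist(\<sigma>_\<psi>(a), \<sigma>_\<psi>(S)) = inf_{s \<in> S} \<parallel>\<sigma>_\<psi>(a) - \<sigma>_\<psi>(s)\<parallel> = inf_{s\<in>S} \<parallel>\<sigma>_\<psi>(a - s)\<parallel>.\<close>
definition gns_dist :: "('a::cstar_algebra \<Rightarrow> complex) \<Rightarrow> 'a set \<Rightarrow> 'a \<Rightarrow> real" where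
  "gns_dist \<psi> S a = (INF s\<in>S. gns_norm \<psi> (a - s))"

definition characteristic_sequence :: "('a::cstar_algebra \<Rightarrow> complex) \<Rightarrow> (nat \<Rightarrow> 'a) \<Rightarrow> bool" where
  "characteristic_sequence \<psi> \<Delta> \<longleftrightarrow> (\<forall>n. norm (\<Delta> n) = 1)
     \<and> ((\<lambda>n. \<psi> (\<Delta> n)) \<longlonglongrightarrow> 1)
     \<and> (\<forall>a. limsup (\<lambda>n. ereal (norm (cstar (\<Delta> n) * a * \<Delta> n))) \<le> ereal (cmod (\<psi> a)))"

end

theory Submission imports Defs "HOL-Computational_Algebra.Formal_Power_Series" begin

lemma phase: "z \<noteq> 0 \<Longrightarrow> cnj z / complex_of_real (cmod z) * z = complex_of_real (cmod z)"
proof -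
  assume z: "z \<noteq> 0"
  have "cnj z * z = complex_of_real (cmod z) * complex_of_real (cmod z)"
    using complex_norm_square[of z] by (simp add: mult.commute power2_eq_square)
  moreover have "complex_of_real (cmod z) \<noteq> 0" using z by simp
  ultimately show ?thesis by (simp add: divide_simps)
qed
context chilbert begin
lemma cinner_add_right: "cinner z (x + y) = cinner z x + cinner z y"
  using cinner_commute[of z "x+y"] cinner_commute[of z x] cinner_commute[of z y] cinner_add_left[of x y z] by simp
lemma cinner_scaleC_right: "cinner y (c *\<^sub>C x) = c * cinner y x"
  using cinner_commute[of y "c *\<^sub>C x"] cinner_commute[of y x] cinner_scaleC_left[of c x y] by simp
lemma cinner_zero_left[simp]: "cinner 0 y = 0"
  using cinner_add_left[of 0 0 y] by simp
lemma cinner_zero_right[simp]: "cinner y 0 = 0"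
  using cinner_commute[of y 0] cinner_zero_left by simp
lemma cinner_minus_left: "cinner (- x) y = - cinner x y"
proof -
  have h: "cinner x y + cinner (-x) y = 0" using cinner_add_left[of x "-x" y] by simp
  have "cinner (-x) y = (cinner x y + cinner (-x) y) - cinner x y" by simp
  also have "\<dots> = - cinner x y" using h by simp
  finally show ?thesis .
qed
lemma cinner_minus_right: "cinner y (- x) = - cinner y x"
proof -
  have "cinner y (- x) = cnj (cinner (-x) y)" by (rule cinner_commute)
  also have "\<dots> = - cnj (cinner x y)" by (simp add: cinner_minus_left)
  also have "cnj (cinner x y) = cinner y x" by (rule cinner_commute[symmetric])
  finally show ?thesis .
qed
lemma cinner_diff_left: "cinner (x - z) y = cinner x y - cinner z y"
proof -
  have "cinner (x + -z) y = cinner x y + - cinner z y" by (simp only: cinner_add_left cinner_minus_left)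
  thus ?thesis by simp
qed
lemma cinner_diff_right: "cinner y (x - z) = cinner y x - cinner y z"
proof -
  have "cinner y (x + -z) = cinner y x + - cinner y z" by (simp only: cinner_add_right cinner_minus_right)
  thus ?thesis by simp
qed
lemma cinner_self: "cinner x x = complex_of_real ((norm x)^2)"
proof -
  have "Im (cinner x x) = 0" "Re (cinner x x) \<ge> 0" using cinner_pos by auto
  moreover have "(norm x)^2 = Re (cinner x x)" using norm_cinner[of x] calculation by simp
  ultimately show ?thesis by (simp add: complex_eq_iff)
qed
lemma Re_cinner_self: "Re (cinner x x) = (norm x)^2" by (simp add: cinner_self)
lemma norm_scaleC: "norm (c *\<^sub>C x) = cmod c * norm x"
proof -
  have e: "cinner (c *\<^sub>C x) (c *\<^sub>C x) = (cnj c * c) * cinner x x"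
    by (simp add: cinner_scaleC_left cinner_scaleC_right mult.assoc)
  have cc: "cnj c * c = complex_of_real ((cmod c)^2)"
    using complex_norm_square[of c] by (simp add: mult.commute)
  have "(norm (c *\<^sub>C x))^2 = Re (cinner (c *\<^sub>C x) (c *\<^sub>C x))"
    by (rule Re_cinner_self[symmetric])
  also have "cinner (c *\<^sub>C x) (c *\<^sub>C x) = complex_of_real ((cmod c)^2 * (norm x)^2)"
    by (simp only: e cc cinner_self[of x] of_real_mult)
  also have "Re (complex_of_real ((cmod c)^2 * (norm x)^2)) = (cmod c * norm x)^2"
    unfolding Re_complex_of_real power_mult_distrib ..
  finally have "(norm (c *\<^sub>C x))^2 = (cmod c * norm x)^2" .
  thus ?thesis by (rule power2_eq_imp_eq) auto
qed
lemma norm_add_sq: "(norm (x + y))^2 = (norm x)^2 + 2 * Re (cinner x y) + (norm y)^2"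
proof -
  have "cinner (x + y) (x + y) = cinner x x + cinner x y + (cinner y x + cinner y y)"
    by (simp add: cinner_add_left cinner_add_right)
  moreover have "Re (cinner y x) = Re (cinner x y)"
    using cinner_commute[of y x] by simp
  ultimately have "Re (cinner (x + y) (x + y)) = Re (cinner x x) + Re (cinner x y) + (Re (cinner x y) + Re (cinner y y))"
    by (simp only: plus_complex.sel)
  thus ?thesis
    using Re_cinner_self[of "x+y"] Re_cinner_self[of x] Re_cinner_self[of y] by linarith
qed
lemma norm_diff_sq: "(norm (x - y))^2 = (norm x)^2 - 2 * Re (cinner x y) + (norm y)^2"
proof -
  have "Re (cinner x (-y)) = - Re (cinner x y)" by (simp add: cinner_minus_right)
  moreover have "norm (-y) = norm y" by (rule norm_minus_cancel)
  moreover have "x + - y = x - y" by simp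
  ultimately show ?thesis using norm_add_sq[of x "-y"] by simp
qed
lemma Re_cinner_le: "Re (cinner x y) \<le> norm x * norm y"
proof -
  have "norm (x + y) \<le> norm x + norm y" by (rule norm_triangle_ineq)
  hence "(norm (x + y))^2 \<le> (norm x + norm y)^2"
    by (simp add: power_mono)
  thus ?thesis unfolding norm_add_sq power2_sum by simp
qed
lemma cinner_cs: "cmod (cinner x y) \<le> norm x * norm y"
proof (cases "cinner x y = 0")
  case True thus ?thesis by simp
next
  case False
  define u where "u = cnj (cinner x y) / complex_of_real (cmod (cinner x y))"
  have u1: "cmod u = 1" using False by (simp add: u_def norm_divide)
  have "cinner x (u *\<^sub>C y) = complex_of_real (cmod (cinner x y))"
    unfolding cinner_scaleC_right u_def by (rule phase[OF False])
  hence "cmod (cinner x y) = Re (cinner x (u *\<^sub>C y))" by simp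
  also have "\<dots> \<le> norm x * norm (u *\<^sub>C y)" by (rule Re_cinner_le)
  finally show ?thesis by (simp add: norm_scaleC u1)
qed
lemma cinner_eq_zero_all: "(\<And>g. cinner g x = 0) \<Longrightarrow> x = 0"
  using cinner_zero_iff by blast
end

lemma cstar_zero[simp]: "cstar (0::'a::cstar_algebra) = 0"
proof -
  have "cstar 0 = cstar (0 + 0)" by simp
  also have "\<dots> = cstar 0 + cstar 0" by (rule cstar_add)
  finally show ?thesis by simp
qed
lemma cstar_one[simp]: "cstar (1::'a::cstar_algebra) = 1"
proof -
  have "cstar (cstar 1 * 1) = cstar 1 * cstar (cstar 1)" by (rule cstar_mult)
  hence "cstar (cstar 1) = cstar 1 * cstar (cstar 1)" by simp
  hence "1 = cstar 1 * 1" by (simp only: cstar_cstar)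
  thus ?thesis by simp
qed
lemma cstar_minus: "cstar (- (x::'a::cstar_algebra)) = - cstar x"
proof -
  have "cstar x + cstar (-x) = 0" using cstar_add[of x "-x"] by simp
  thus ?thesis by (simp add: eq_neg_iff_add_eq_0 add.commute)
qed
lemma cstar_diff: "cstar ((x::'a::cstar_algebra) - y) = cstar x - cstar y"
proof -
  have "cstar (x + - y) = cstar x + - cstar y" by (simp only: cstar_add cstar_minus)
  thus ?thesis by simp
qed
lemma cstar_scaleR: "cstar (r *\<^sub>R (x::'a::cstar_algebra)) = r *\<^sub>R cstar x"
  by (simp only: cstar_scaleR_scaleC cstar_scaleC complex_cnj_complex_of_real)
lemma norm_cstar: "norm (cstar (x::'a::cstar_algebra)) = norm x"
proof -
  have le: "norm z \<le> norm (cstar z)" for z :: 'a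
  proof (cases "z = 0")
    case True thus ?thesis by simp
  next
    case False
    have "(norm z)^2 = norm (cstar z * z)" by (simp add: cstar_identity)
    also have "\<dots> \<le> norm (cstar z) * norm z" by (rule norm_mult_ineq)
    finally have "(norm z)^2 \<le> norm (cstar z) * norm z" .
    hence "norm z * norm z \<le> norm (cstar z) * norm z" unfolding power2_eq_square .
    thus ?thesis using False by simp
  qed
  show ?thesis using le[of x] le[of "cstar x"] by (simp add: cstar_cstar)
qed
lemma bounded_linear_cstar: "bounded_linear (cstar :: 'a::cstar_algebra \<Rightarrow> 'a)"
  by (rule bounded_linear_intro[where K=1]) (simp_all add: cstar_add cstar_scaleR norm_cstar)
lemma cstar_power: "cstar (y::'a::cstar_algebra) = y \<Longrightarrow> cstar (y ^ k) = y ^ k"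
proof (induction k)
  case 0 thus ?case by simp
next
  case (Suc k)
  have "cstar (y ^ Suc k) = cstar (y * y ^ k)" by simp
  also have "\<dots> = cstar (y ^ k) * cstar y" by (rule cstar_mult)
  also have "\<dots> = y ^ k * y" using Suc by simp
  also have "\<dots> = y ^ Suc k" by (simp add: power_commutes)
  finally show ?case .
qed


lemma gbin_half_le: "\<bar>((1/2::real) gchoose k)\<bar> \<le> 1"
proof (induction k)
  case 0 thus ?case by simp
next
  case (Suc k)
  have f: "fact (Suc k) * ((1/2::real) gchoose Suc k) = (fact k * ((1/2::real) gchoose k)) * (1/2 - of_nat k)"
    unfolding gbinomial_mult_fact by (rule prod.atLeast0_lessThan_Suc)
  have "((1/2::real) gchoose Suc k) = ((1/2::real) gchoose k) * ((1/2 - of_nat k) / of_nat (Suc k))"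
  proof -
    have F: "fact k \<noteq> (0::real)" by simp
    have "(of_nat (Suc k) :: real) * fact k * ((1/2::real) gchoose Suc k) = fact k * ((1/2::real) gchoose k) * (1/2 - of_nat k)"
      using f unfolding fact_Suc .
    hence "fact k * ((of_nat (Suc k) :: real) * ((1/2::real) gchoose Suc k)) = fact k * (((1/2::real) gchoose k) * (1/2 - of_nat k))"
      by (simp only: ac_simps)
    hence "(of_nat (Suc k) :: real) * ((1/2::real) gchoose Suc k) = ((1/2::real) gchoose k) * (1/2 - of_nat k)"
      by (rule mult_left_cancel[OF F, THEN iffD1])
    thus ?thesis by (simp add: eq_divide_eq ac_simps del: of_nat_Suc)
  qed
  moreover have "\<bar>(1/2 - of_nat k) / of_nat (Suc k)\<bar> \<le> (1::real)"
    by (simp add: abs_if field_simps)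
  ultimately have "\<bar>((1/2::real) gchoose Suc k)\<bar> = \<bar>((1/2::real) gchoose k)\<bar> * \<bar>(1/2 - of_nat k) / of_nat (Suc k)\<bar>"
    by (simp only: abs_mult)
  also have "\<dots> \<le> 1 * 1"
    by (rule mult_mono) (use Suc.IH \<open>\<bar>(1/2 - of_nat k) / of_nat (Suc k)\<bar> \<le> (1::real)\<close> in auto)
  finally show ?case by simp
qed

lemma gbin_one: "((1::real) gchoose k) = (if k = 0 then 1 else if k = 1 then 1 else 0)"
proof (cases "k \<ge> 2")
  case True
  have "(\<Prod>i = 0..<k. (1::real) - of_nat i) = 0"
    using True by (subst prod_zero_iff) (auto intro!: bexI[of _ 1])
  hence "fact k * ((1::real) gchoose k) = 0" by (simp only: gbinomial_mult_fact)
  hence "((1::real) gchoose k) = 0" by simp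
  thus ?thesis using True by simp
next
  case False
  hence "k = 0 \<or> k = 1" by auto
  thus ?thesis by auto
qed


lemma coeff_conv: "(\<Sum>i\<le>k. (((1/2::real) gchoose i) * (-1)^i) * (((1/2::real) gchoose (k - i)) * (-1)^(k - i)))
   = (-1)^k * ((1::real) gchoose k)"
proof -
  have "(\<Sum>i\<le>k. (((1/2::real) gchoose i) * (-1)^i) * (((1/2::real) gchoose (k - i)) * (-1)^(k - i)))
     = (\<Sum>i\<le>k. (-1)^k * (((1/2::real) gchoose i) * ((1/2::real) gchoose (k - i))))"
  proof (rule sum.cong[OF refl])
    fix i assume "i \<in> {..k}"
    hence e: "i + (k - i) = k" by simp
    have "(-1::real)^i * (-1)^(k - i) = (-1)^(i + (k - i))" by (rule power_add[symmetric])
    also have "\<dots> = (-1)^k" by (simp only: e)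
    finally have pp: "(-1::real)^i * (-1)^(k - i) = (-1)^k" .
    have "(((1/2::real) gchoose i) * (-1)^i) * (((1/2::real) gchoose (k - i)) * (-1)^(k - i))
       = ((-1::real)^i * (-1)^(k - i)) * (((1/2::real) gchoose i) * ((1/2::real) gchoose (k - i)))"
      by (simp only: ac_simps)
    also have "\<dots> = (-1)^k * (((1/2::real) gchoose i) * ((1/2::real) gchoose (k - i)))"
      by (simp only: pp)
    finally show "(((1/2::real) gchoose i) * (-1)^i) * (((1/2::real) gchoose (k - i)) * (-1)^(k - i))
       = (-1)^k * (((1/2::real) gchoose i) * ((1/2::real) gchoose (k - i)))" .
  qed
  also have "\<dots> = (-1)^k * (\<Sum>i\<le>k. ((1/2::real) gchoose i) * ((1/2::real) gchoose (k - i)))"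
    by (simp only: sum_distrib_left)
  also have "(\<Sum>i\<le>k. ((1/2::real) gchoose i) * ((1/2::real) gchoose (k - i))) = (1/2 + 1/2) gchoose k"
    unfolding atMost_atLeast0 by (rule gbinomial_Vandermonde)
  finally show ?thesis by simp
qed

lemma cstar_sqrt:
  fixes y :: "'a::cstar_algebra"
  assumes sa: "cstar y = y" and ny: "norm y < 1"
  shows "\<exists>c. cstar c = c \<and> c * c = 1 - y"
proof -
  define g where "g k = ((1/2::real) gchoose k) * (-1)^k" for k
  define a where "a k = g k *\<^sub>R y^k" for k
  have na: "norm (a k) \<le> norm y ^ k" for k
  proof -
    have "norm (a k) = \<bar>g k\<bar> * norm (y^k)" by (simp add: a_def)
    also have "\<dots> \<le> 1 * norm y ^ k"
      by (rule mult_mono) (auto simp: g_def abs_mult gbin_half_le norm_power_ineq)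
    finally show ?thesis by simp
  qed
  have sna: "summable (\<lambda>k. norm (a k))"
    by (rule summable_comparison_test'[where N=0 and g="\<lambda>k. norm y ^ k"])
       (use ny na in \<open>auto intro: summable_geometric\<close>)
  hence suma: "summable a" by (rule summable_norm_cancel)
  define c where "c = suminf a"
  have "cstar c = (\<Sum>k. cstar (a k))"
    unfolding c_def by (rule bounded_linear.suminf[OF bounded_linear_cstar suma])
  also have "(\<lambda>k. cstar (a k)) = a"
    by (rule ext) (simp add: a_def cstar_scaleR cstar_power[OF sa])
  finally have cs: "cstar c = c" by (simp add: c_def)
  have "c * c = (\<Sum>k. \<Sum>i\<le>k. a i * a (k - i))"
    unfolding c_def by (rule Cauchy_product[OF sna sna])
  also have "(\<lambda>k. \<Sum>i\<le>k. a i * a (k - i)) = (\<lambda>k. ((-1)^k * ((1::real) gchoose k)) *\<^sub>R y^k)"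
  proof (rule ext)
    fix k
    have "(\<Sum>i\<le>k. a i * a (k - i)) = (\<Sum>i\<le>k. (g i * g (k - i)) *\<^sub>R y^k)"
    proof (rule sum.cong[OF refl])
      fix i assume "i \<in> {..k}"
      hence e: "i + (k - i) = k" by simp
      have "y^i * y^(k - i) = y^(i + (k - i))" by (rule power_add[symmetric])
      also have "\<dots> = y^k" by (simp only: e)
      finally have yy: "y^i * y^(k - i) = y^k" .
      show "a i * a (k - i) = (g i * g (k - i)) *\<^sub>R y^k"
        unfolding a_def by (simp only: mult_scaleR_left mult_scaleR_right scaleR_scaleR yy ac_simps)
    qed
    also have "\<dots> = (\<Sum>i\<le>k. g i * g (k - i)) *\<^sub>R y^k" by (simp only: scaleR_sum_left)
    also have "(\<Sum>i\<le>k. g i * g (k - i)) = (-1)^k * ((1::real) gchoose k)"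
      unfolding g_def by (rule coeff_conv)
    finally show "(\<Sum>i\<le>k. a i * a (k - i)) = ((-1)^k * ((1::real) gchoose k)) *\<^sub>R y^k" .
  qed
  also have "(\<Sum>k. ((-1)^k * ((1::real) gchoose k)) *\<^sub>R y^k) = (\<Sum>k\<in>{0,1}. ((-1)^k * ((1::real) gchoose k)) *\<^sub>R y^k)"
    by (rule suminf_finite) (auto simp: gbin_one)
  also have "\<dots> = 1 - y" by (simp add: gbin_one)
  finally show ?thesis using cs by blast
qed


lemma pos_sq_decomp:
  fixes x :: "'a::cstar_algebra"
  assumes t: "norm x < t"
  shows "\<exists>c. cstar c * c = (t^2) *\<^sub>R 1 - cstar x * x"
proof -
  have tp: "t > 0" using t norm_ge_zero[of x] by linarith
  define y where "y = (1 / t^2) *\<^sub>R (cstar x * x)"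
  have sy: "cstar y = y" unfolding y_def by (simp add: cstar_scaleR cstar_mult cstar_cstar)
  have "norm y = (norm x)^2 / t^2" unfolding y_def using tp by (simp add: cstar_identity)
  also have "\<dots> < 1" using t tp by (simp add: power_strict_mono)
  finally obtain c0 where c0: "cstar c0 = c0" "c0 * c0 = 1 - y" using cstar_sqrt[OF sy] by blast
  have "cstar (t *\<^sub>R c0) * (t *\<^sub>R c0) = (t^2) *\<^sub>R (c0 * c0)"
    by (simp add: cstar_scaleR c0(1) power2_eq_square)
  also have "\<dots> = (t^2) *\<^sub>R 1 - cstar x * x"
    using tp by (simp add: c0(2) y_def scaleR_diff_right)
  finally show ?thesis by blast
qed

lemma le_sq_limit:
  fixes F G a :: real
  assumes H: "\<And>t. t > a \<Longrightarrow> F \<le> t^2 * G" and a: "a \<ge> 0" and G: "G \<ge> 0"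
  shows "F \<le> a^2 * G"
proof (rule ccontr)
  assume "\<not> F \<le> a^2 * G"
  hence Fg: "F > a^2 * G" by simp
  have Gp: "G > 0"
  proof (rule ccontr)
    assume "\<not> G > 0" hence "G = 0" using G by simp
    thus False using H[of "a+1"] Fg by simp
  qed
  define s where "s = sqrt (F / G)"
  have "F / G > a^2" using Fg Gp by (simp add: field_simps)
  hence sa: "s > a" unfolding s_def using a by (metis real_less_rsqrt)
  define t where "t = (a + s) / 2"
  have t1: "t > a" using sa by (simp add: t_def)
  have t2: "t < s" "t \<ge> 0" using sa a by (auto simp: t_def)
  have "t^2 < s^2" using t2 by (simp add: power_strict_mono)
  have nn: "F / G \<ge> 0" using \<open>F / G > a^2\<close> zero_le_power2[of a] by linarith
  have "s^2 = F / G" unfolding s_def using nn by simp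
  have "t^2 < F / G" using \<open>t^2 < s^2\<close> \<open>s^2 = F / G\<close> by simp
  hence "t^2 * G < F" using Gp by (simp add: field_simps)
  thus False using H[OF t1] by simp
qed

lemma pos_form_bound:
  fixes f :: "'a::cstar_algebra \<Rightarrow> real"
  assumes add: "\<And>u v. f (u + v) = f u + f v" and sc: "\<And>r u. f (r *\<^sub>R u) = r * f u"
    and pos: "\<And>z. f (cstar z * z) \<ge> 0"
  shows "f (cstar (x * b) * (x * b)) \<le> (norm x)^2 * f (cstar b * b)"
proof -
  have diff: "f (u - v) = f u - f v" for u v
    using add[of "u - v" v] by simp
  have "f (cstar (x*b) * (x*b)) \<le> t^2 * f (cstar b * b)" if t: "t > norm x" for t
  proof -
    obtain c where c: "cstar c * c = (t^2) *\<^sub>R 1 - cstar x * x" using pos_sq_decomp[OF t] by blast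
    have "cstar (c * b) * (c * b) = cstar b * (cstar c * c) * b" by (simp add: cstar_mult mult.assoc)
    also have "\<dots> = cstar b * ((t^2) *\<^sub>R 1 - cstar x * x) * b" by (simp only: c)
    also have "\<dots> = (t^2) *\<^sub>R (cstar b * b) - cstar (x*b) * (x*b)"
      by (simp add: cstar_mult right_diff_distrib left_diff_distrib mult.assoc)
    finally have "f (cstar (c * b) * (c * b)) = t^2 * f (cstar b * b) - f (cstar (x*b) * (x*b))"
      by (simp add: diff sc)
    thus ?thesis using pos[of "c * b"] by simp
  qed
  thus ?thesis by (rule le_sq_limit) (simp_all add: pos)
qed


lemma bop_add: "bounded_op T \<Longrightarrow> T (x + y) = T x + T y" by (simp add: bounded_op_def)
lemma bop_scaleC: "bounded_op T \<Longrightarrow> T (c *\<^sub>C x) = c *\<^sub>C T x" by (simp add: bounded_op_def)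
lemma bop_zero: "bounded_op T \<Longrightarrow> T 0 = 0"
  using bop_add[of T 0 0] by simp
lemma bop_minus: "bounded_op T \<Longrightarrow> T (- x) = - T x"
  using bop_add[of T x "-x"] bop_zero[of T] by (simp add: eq_neg_iff_add_eq_0 add.commute)
lemma bop_diff: "bounded_op T \<Longrightarrow> T (x - y) = T x - T y"
proof -
  assume T: "bounded_op T"
  have "T (x + - y) = T x + - T y" by (simp only: bop_add[OF T] bop_minus[OF T])
  thus ?thesis by simp
qed
lemma bop_scaleR: "bounded_op T \<Longrightarrow> T (r *\<^sub>R x) = r *\<^sub>R T (x::'h::chilbert)"
  by (simp only: chilbert_scaleR_scaleC bop_scaleC)

lemma lm_bop: "linear_map_BH \<Phi> \<Longrightarrow> bounded_op (\<Phi> a)" by (simp add: linear_map_BH_def)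
lemma lm_add: "linear_map_BH \<Phi> \<Longrightarrow> \<Phi> (a + b) h = \<Phi> a h + \<Phi> b h" by (simp add: linear_map_BH_def)
lemma lm_scaleC: "linear_map_BH \<Phi> \<Longrightarrow> \<Phi> (c *\<^sub>C a) h = c *\<^sub>C \<Phi> a h" by (simp add: linear_map_BH_def)
lemma lm_zero: "linear_map_BH \<Phi> \<Longrightarrow> \<Phi> 0 h = 0"
  using lm_add[of \<Phi> 0 0 h] by simp
lemma lm_minus: "linear_map_BH \<Phi> \<Longrightarrow> \<Phi> (- a) h = - \<Phi> a h"
  using lm_add[of \<Phi> a "-a" h] lm_zero[of \<Phi> h] by (simp add: eq_neg_iff_add_eq_0 add.commute)
lemma lm_diff: "linear_map_BH \<Phi> \<Longrightarrow> \<Phi> (a - b) h = \<Phi> a h - \<Phi> b h"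
proof -
  assume T: "linear_map_BH \<Phi>"
  have "\<Phi> (a + - b) h = \<Phi> a h + - \<Phi> b h" by (simp only: lm_add[OF T] lm_minus[OF T])
  thus ?thesis by simp
qed
lemma lm_scaleR: "linear_map_BH (\<Phi> :: 'a::cstar_algebra \<Rightarrow> 'h::chilbert \<Rightarrow> 'h) \<Longrightarrow> \<Phi> (r *\<^sub>R a) h = r *\<^sub>R \<Phi> a h"
  by (simp only: chilbert_scaleR_scaleC cstar_scaleR_scaleC lm_scaleC)

lemma form_bound_gen:
  fixes f :: "'a::cstar_algebra \<Rightarrow> complex"
  assumes add: "\<And>u v. f (u + v) = f u + f v" and sc: "\<And>c u. f (c *\<^sub>C u) = c * f u"
    and pos: "\<And>z. Re (f (cstar z * z)) \<ge> 0"
  shows "Re (f (cstar (x * b) * (x * b))) \<le> (norm x)^2 * Re (f (cstar b * b))"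
proof (rule pos_form_bound[where f="\<lambda>a. Re (f a)"])
  show "Re (f (u + v)) = Re (f u) + Re (f v)" for u v by (simp add: add)
  show "Re (f (r *\<^sub>R u)) = r * Re (f u)" for r u by (simp add: cstar_scaleR_scaleC sc)
  show "Re (f (cstar z * z)) \<ge> 0" for z by (rule pos)
qed

lemma rep_herm: "unital_star_rep \<pi> \<Longrightarrow> cinner g (\<pi> (cstar a) h) = cinner (\<pi> a g) h"
  unfolding unital_star_rep_def using cstar_cstar by metis
lemma rep_mult: "unital_star_rep \<pi> \<Longrightarrow> \<pi> (a * b) h = \<pi> a (\<pi> b h)"
  unfolding unital_star_rep_def by blast
lemma rep_one: "unital_star_rep \<pi> \<Longrightarrow> \<pi> 1 h = h"
  unfolding unital_star_rep_def by blast
lemma rep_lm: "unital_star_rep \<pi> \<Longrightarrow> linear_map_BH \<pi>"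
  unfolding unital_star_rep_def by blast

lemma rep_form:
  assumes "unital_star_rep (\<pi> :: 'a::cstar_algebra \<Rightarrow> 'h::chilbert \<Rightarrow> 'h)"
  shows "Re (cinner h (\<pi> (cstar (x * b) * (x * b)) h)) \<le> (norm x)^2 * Re (cinner h (\<pi> (cstar b * b) h))"
proof (rule form_bound_gen[where f="\<lambda>a. cinner h (\<pi> a h)"])
  note L = rep_lm[OF assms]
  show "cinner h (\<pi> (u + v) h) = cinner h (\<pi> u h) + cinner h (\<pi> v h)" for u v
    by (simp add: lm_add[OF L] cinner_add_right)
  show "cinner h (\<pi> (c *\<^sub>C u) h) = c * cinner h (\<pi> u h)" for c u
    by (simp add: lm_scaleC[OF L] cinner_scaleC_right)
  show "Re (cinner h (\<pi> (cstar z * z) h)) \<ge> 0" for z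
    by (simp add: rep_mult[OF assms] rep_herm[OF assms] Re_cinner_self)
qed

lemma rep_contr:
  assumes "unital_star_rep (\<pi> :: 'a::cstar_algebra \<Rightarrow> 'h::chilbert \<Rightarrow> 'h)"
  shows "norm (\<pi> x h) \<le> norm x * norm h"
proof -
  have "(norm (\<pi> x h))^2 = Re (cinner h (\<pi> (cstar (x * 1) * (x * 1)) h))"
    by (simp add: rep_mult[OF assms] rep_herm[OF assms] Re_cinner_self)
  also have "\<dots> \<le> (norm x)^2 * Re (cinner h (\<pi> (cstar 1 * 1) h))" by (rule rep_form[OF assms])
  also have "\<dots> = (norm x * norm h)^2" by (simp add: rep_one[OF assms] Re_cinner_self power_mult_distrib)
  finally show ?thesis by (rule power2_le_imp_le) simp
qed


lemma cp3:
  fixes \<Phi> :: "'a::cstar_algebra \<Rightarrow> 'h::chilbert \<Rightarrow> 'h" and va vb vc :: 'a and ha hb hc :: 'h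
  assumes cp: "completely_positive \<Phi>"
  defines "T \<equiv> (cinner ha (\<Phi> (cstar va * va) ha) + cinner ha (\<Phi> (cstar va * vb) hb) + cinner ha (\<Phi> (cstar va * vc) hc))
     + (cinner hb (\<Phi> (cstar vb * va) ha) + cinner hb (\<Phi> (cstar vb * vb) hb) + cinner hb (\<Phi> (cstar vb * vc) hc))
     + (cinner hc (\<Phi> (cstar vc * va) ha) + cinner hc (\<Phi> (cstar vc * vb) hb) + cinner hc (\<Phi> (cstar vc * vc) hc))"
  shows "Im T = 0 \<and> Re T \<ge> 0"
proof -
  define v where "v i = (if i = 0 then va else if i = Suc 0 then vb else vc)" for i :: nat
  define hh where "hh i = (if i = 0 then ha else if i = Suc 0 then hb else hc)" for i :: nat
  define Y where "Y k i = (if k = 0 then v i else 0)" for k i :: nat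
  have Ysum: "(\<Sum>k<3. cstar (Y k i) * Y k j) = cstar (v i) * v j" for i j
    by (simp add: numeral_3_eq_3 Y_def)
  have "let s = (\<Sum>i<3. \<Sum>j<3. cinner (hh i) (\<Phi> (\<Sum>k<3. cstar (Y k i) * Y k j) (hh j))) in Im s = 0 \<and> Re s \<ge> 0"
    using cp unfolding completely_positive_def by blast
  hence "Im S = 0 \<and> Re S \<ge> 0" if "S = (\<Sum>i<3. \<Sum>j<3. cinner (hh i) (\<Phi> (cstar (v i) * v j) (hh j)))" for S
    using that by (simp add: Ysum Let_def)
  moreover have "(\<Sum>i<3. \<Sum>j<3. cinner (hh i) (\<Phi> (cstar (v i) * v j) (hh j))) = T"
    by (simp add: numeral_3_eq_3 v_def hh_def T_def)
  ultimately show ?thesis by blast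
qed


lemma ucp_lm: "ucp_map \<Phi> \<Longrightarrow> linear_map_BH \<Phi>" by (simp add: ucp_map_def)
lemma ucp_cp: "ucp_map \<Phi> \<Longrightarrow> completely_positive \<Phi>" by (simp add: ucp_map_def)
lemma ucp_one: "ucp_map \<Phi> \<Longrightarrow> \<Phi> 1 h = h" by (simp add: ucp_map_def)

lemma ucp_pos1:
  fixes \<Phi> :: "'a::cstar_algebra \<Rightarrow> 'h::chilbert \<Rightarrow> 'h"
  assumes u: "ucp_map \<Phi>"
  shows "Im (cinner h (\<Phi> (cstar z * z) h)) = 0 \<and> Re (cinner h (\<Phi> (cstar z * z) h)) \<ge> 0"
  using cp3[OF ucp_cp[OF u], where ha=h and va=z and vb=0 and vc=0 and hb=0 and hc=0]
  by (simp add: bop_zero[OF lm_bop[OF ucp_lm[OF u]]])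

lemma ucp_herm_aux:
  fixes \<Phi> :: "'a::cstar_algebra \<Rightarrow> 'h::chilbert \<Rightarrow> 'h"
  assumes u: "ucp_map \<Phi>"
  shows "Im (cinner h (\<Phi> y k) + cinner k (\<Phi> (cstar y) h)) = 0"
proof -
  note L = ucp_lm[OF u]
  have "Im (cinner h (\<Phi> 1 h) + cinner h (\<Phi> y k) + cinner k (\<Phi> (cstar y) h) + cinner k (\<Phi> (cstar y * y) k)) = 0"
    using cp3[OF ucp_cp[OF u], where ha=h and va=1 and vb=y and vc=0 and hb=k and hc=0]
    by (simp add: bop_zero[OF lm_bop[OF L]] lm_zero[OF L] add.assoc)
  moreover have "Im (cinner h (\<Phi> 1 h)) = 0" by (simp add: ucp_one[OF u] cinner_self)
  moreover have "Im (cinner k (\<Phi> (cstar y * y) k)) = 0" using ucp_pos1[OF u] by blast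
  ultimately show ?thesis by simp
qed

lemma ucp_herm:
  fixes \<Phi> :: "'a::cstar_algebra \<Rightarrow> 'h::chilbert \<Rightarrow> 'h"
  assumes u: "ucp_map \<Phi>"
  shows "cinner k (\<Phi> (cstar y) h) = cinner (\<Phi> y k) h"
proof -
  note B = lm_bop[OF ucp_lm[OF u]]
  define A where "A = cinner h (\<Phi> y k)"
  define C where "C = cinner k (\<Phi> (cstar y) h)"
  have 1: "Im (A + C) = 0" unfolding A_def C_def by (rule ucp_herm_aux[OF u])
  have "Im (cinner h (\<Phi> y (\<i> *\<^sub>C k)) + cinner (\<i> *\<^sub>C k) (\<Phi> (cstar y) h)) = 0"
    by (rule ucp_herm_aux[OF u])
  hence "Im (\<i> * A - \<i> * C) = 0"
    by (simp add: A_def C_def bop_scaleC[OF B] cinner_scaleC_right cinner_scaleC_left)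
  hence 2: "Re A = Re C" by simp
  have "C = cnj A" using 1 2 by (simp add: complex_eq_iff)
  also have "cnj A = cinner (\<Phi> y k) h" unfolding A_def by (rule cinner_commute[symmetric])
  finally show ?thesis unfolding C_def .
qed

lemma ucp_schwarz:
  fixes \<Phi> :: "'a::cstar_algebra \<Rightarrow> 'h::chilbert \<Rightarrow> 'h"
  assumes u: "ucp_map \<Phi>"
  shows "(norm (\<Phi> x k))^2 \<le> Re (cinner k (\<Phi> (cstar x * x) k))"
proof -
  note L = ucp_lm[OF u]
  define w where "w = \<Phi> x k"
  have T: "Im (cinner (-w) (\<Phi> 1 (-w)) + cinner (-w) (\<Phi> x k) + cinner k (\<Phi> (cstar x) (-w)) + cinner k (\<Phi> (cstar x * x) k)) = 0
      \<and> Re (cinner (-w) (\<Phi> 1 (-w)) + cinner (-w) (\<Phi> x k) + cinner k (\<Phi> (cstar x) (-w)) + cinner k (\<Phi> (cstar x * x) k)) \<ge> 0"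
    using cp3[OF ucp_cp[OF u], where ha="-w" and va=1 and vb=x and vc=0 and hb=k and hc=0]
    by (simp add: bop_zero[OF lm_bop[OF L]] lm_zero[OF L] add.assoc)
  have e1: "cinner (-w) (\<Phi> 1 (-w)) = cinner w w" by (simp add: ucp_one[OF u] cinner_minus_left cinner_minus_right)
  have e2: "cinner (-w) (\<Phi> x k) = - cinner w w" by (simp add: w_def cinner_minus_left)
  have e3: "cinner k (\<Phi> (cstar x) (-w)) = - cinner w w"
    by (simp add: ucp_herm[OF u] w_def cinner_minus_right)
  have "Re (cinner w w) - Re (cinner w w) - Re (cinner w w) + Re (cinner k (\<Phi> (cstar x * x) k)) \<ge> 0"
    using T unfolding e1 e2 e3 by simp
  thus ?thesis by (simp add: Re_cinner_self w_def)
qed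

lemma ucp_form:
  fixes \<Phi> :: "'a::cstar_algebra \<Rightarrow> 'h::chilbert \<Rightarrow> 'h"
  assumes u: "ucp_map \<Phi>"
  shows "Re (cinner h (\<Phi> (cstar (x * b) * (x * b)) h)) \<le> (norm x)^2 * Re (cinner h (\<Phi> (cstar b * b) h))"
proof (rule form_bound_gen[where f="\<lambda>a. cinner h (\<Phi> a h)"])
  note L = ucp_lm[OF u]
  show "cinner h (\<Phi> (u + v) h) = cinner h (\<Phi> u h) + cinner h (\<Phi> v h)" for u v
    by (simp add: lm_add[OF L] cinner_add_right)
  show "cinner h (\<Phi> (c *\<^sub>C u) h) = c * cinner h (\<Phi> u h)" for c u
    by (simp add: lm_scaleC[OF L] cinner_scaleC_right)
  show "Re (cinner h (\<Phi> (cstar z * z) h)) \<ge> 0" for z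
    using ucp_pos1[OF u] by blast
qed

lemma ucp_form1:
  fixes \<Phi> :: "'a::cstar_algebra \<Rightarrow> 'h::chilbert \<Rightarrow> 'h"
  assumes u: "ucp_map \<Phi>"
  shows "Re (cinner h (\<Phi> (cstar x * x) h)) \<le> (norm x)^2 * (norm h)^2"
  using ucp_form[OF u, of h x 1] by (simp add: ucp_one[OF u] Re_cinner_self)

lemma ucp_contr:
  fixes \<Phi> :: "'a::cstar_algebra \<Rightarrow> 'h::chilbert \<Rightarrow> 'h"
  assumes u: "ucp_map \<Phi>"
  shows "norm (\<Phi> x h) \<le> norm x * norm h"
proof -
  have "(norm (\<Phi> x h))^2 \<le> (norm x * norm h)^2"
    using ucp_schwarz[OF u, of x h] ucp_form1[OF u, of h x] by (simp add: power_mult_distrib)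
  thus ?thesis by (rule power2_le_imp_le) simp
qed


lemma ucp_gram_aux:
  fixes \<Phi> :: "'a::cstar_algebra \<Rightarrow> 'h::chilbert \<Rightarrow> 'h"
  assumes u: "ucp_map \<Phi>"
  shows "0 \<le> (Re (cinner h (\<Phi> (cstar d * d) h)) - (norm (\<Phi> d h))^2)
     + 2 * Re (cinner k (\<Phi> (x * d) h - \<Phi> x (\<Phi> d h))) + (norm x)^2 * (norm k)^2"
proof -
  note L = ucp_lm[OF u]
  note B = lm_bop[OF L]
  define P where "P = \<Phi> d h"
  define v where "v = \<Phi> (cstar x) k"
  define uu where "uu = P + v"
  have T: "Re ((cinner (-uu) (\<Phi> (cstar 1 * 1) (-uu)) + cinner (-uu) (\<Phi> (cstar 1 * d) h) + cinner (-uu) (\<Phi> (cstar 1 * cstar x) k))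
     + (cinner h (\<Phi> (cstar d * 1) (-uu)) + cinner h (\<Phi> (cstar d * d) h) + cinner h (\<Phi> (cstar d * cstar x) k))
     + (cinner k (\<Phi> (cstar (cstar x) * 1) (-uu)) + cinner k (\<Phi> (cstar (cstar x) * d) h) + cinner k (\<Phi> (cstar (cstar x) * cstar x) k))) \<ge> 0"
    using cp3[OF ucp_cp[OF u], where ha="-uu" and va=1 and vb=d and vc="cstar x" and hb=h and hc=k] by blast
  have e1: "cinner (-uu) (\<Phi> (cstar 1 * 1) (-uu)) = cinner uu uu"
    by (simp add: ucp_one[OF u] cinner_minus_left cinner_minus_right)
  have e2: "cinner (-uu) (\<Phi> (cstar 1 * d) h) + cinner (-uu) (\<Phi> (cstar 1 * cstar x) k) = - cinner uu uu"
  proof -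
    have "cinner (-uu) (\<Phi> (cstar 1 * d) h) + cinner (-uu) (\<Phi> (cstar 1 * cstar x) k) = cinner (-uu) (P + v)"
      by (simp add: P_def v_def cinner_add_right)
    also have "\<dots> = - cinner uu uu" by (simp only: uu_def[symmetric] cinner_minus_left)
    finally show ?thesis .
  qed
  have e3: "cinner h (\<Phi> (cstar d * 1) (-uu)) + cinner k (\<Phi> (cstar (cstar x) * 1) (-uu)) = - cinner uu uu"
  proof -
    have "cinner h (\<Phi> (cstar d * 1) (-uu)) = cinner P (-uu)" by (simp add: ucp_herm[OF u] P_def)
    moreover have "cinner k (\<Phi> (cstar (cstar x) * 1) (-uu)) = cinner v (-uu)"
      by (simp add: ucp_herm[OF u] v_def)
    ultimately have "cinner h (\<Phi> (cstar d * 1) (-uu)) + cinner k (\<Phi> (cstar (cstar x) * 1) (-uu)) = cinner P (-uu) + cinner v (-uu)"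
      by simp
    also have "\<dots> = cinner (P + v) (-uu)" by (simp only: cinner_add_left)
    also have "\<dots> = - cinner uu uu" by (simp only: uu_def[symmetric] cinner_minus_right)
    finally show ?thesis .
  qed
  have e4: "cinner h (\<Phi> (cstar d * cstar x) k) = cinner (\<Phi> (x * d) h) k"
  proof -
    have "cstar d * cstar x = cstar (x * d)" by (simp add: cstar_mult)
    thus ?thesis by (simp add: ucp_herm[OF u])
  qed
  have e5: "Re (cinner (\<Phi> (x * d) h) k) = Re (cinner k (\<Phi> (x * d) h))"
    using cinner_commute[of k "\<Phi> (x * d) h"] by simp
  have e6: "Re (cinner k (\<Phi> (cstar (cstar x) * cstar x) k)) \<le> (norm x)^2 * (norm k)^2"
    using ucp_form1[OF u, of k "cstar x"] by (simp add: norm_cstar)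
  have e7: "cstar (cstar x) * d = x * d" by (simp add: cstar_cstar)
  have e8: "(norm uu)^2 = (norm P)^2 + 2 * Re (cinner k (\<Phi> x P)) + (norm v)^2"
  proof -
    have "cinner P v = cinner (\<Phi> x P) k" by (simp add: v_def ucp_herm[OF u])
    hence "Re (cinner P v) = Re (cinner k (\<Phi> x P))"
      using cinner_commute[of k "\<Phi> x P"] by simp
    thus ?thesis unfolding uu_def norm_add_sq by simp
  qed
  have e9: "Re (cinner k (\<Phi> (x * d) h - \<Phi> x P)) = Re (cinner k (\<Phi> (x * d) h)) - Re (cinner k (\<Phi> x P))"
    by (simp add: cinner_diff_right)
  have ruu: "Re (cinner uu uu) = (norm uu)^2" by (rule Re_cinner_self)
  have r1: "Re (cinner (-uu) (\<Phi> (cstar 1 * 1) (-uu))) = Re (cinner uu uu)" using e1 by simp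
  have r2: "Re (cinner (-uu) (\<Phi> (cstar 1 * d) h)) + Re (cinner (-uu) (\<Phi> (cstar 1 * cstar x) k)) = - Re (cinner uu uu)"
    using arg_cong[OF e2, of Re] by (simp only: plus_complex.sel uminus_complex.sel)
  have r3: "Re (cinner h (\<Phi> (cstar d * 1) (-uu))) + Re (cinner k (\<Phi> (cstar (cstar x) * 1) (-uu))) = - Re (cinner uu uu)"
    using arg_cong[OF e3, of Re] by (simp only: plus_complex.sel uminus_complex.sel)
  have r4: "Re (cinner h (\<Phi> (cstar d * cstar x) k)) = Re (cinner k (\<Phi> (x * d) h))"
    using e4 e5 by simp
  have r5: "Re (cinner k (\<Phi> (cstar (cstar x) * d) h)) = Re (cinner k (\<Phi> (x * d) h))" by (simp only: e7)
  have T': "0 \<le> Re (cinner (-uu) (\<Phi> (cstar 1 * 1) (-uu))) + Re (cinner (-uu) (\<Phi> (cstar 1 * d) h)) + Re (cinner (-uu) (\<Phi> (cstar 1 * cstar x) k))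
     + (Re (cinner h (\<Phi> (cstar d * 1) (-uu))) + Re (cinner h (\<Phi> (cstar d * d) h)) + Re (cinner h (\<Phi> (cstar d * cstar x) k)))
     + (Re (cinner k (\<Phi> (cstar (cstar x) * 1) (-uu))) + Re (cinner k (\<Phi> (cstar (cstar x) * d) h)) + Re (cinner k (\<Phi> (cstar (cstar x) * cstar x) k)))"
    using T by (simp only: plus_complex.sel)
  show ?thesis using T' r1 r2 r3 r4 r5 e6 e8 e9 ruu unfolding P_def[symmetric]
    using zero_le_power2[of "norm v"] by linarith
qed


lemma ucp_gram:
  fixes \<Phi> :: "'a::cstar_algebra \<Rightarrow> 'h::chilbert \<Rightarrow> 'h"
  assumes u: "ucp_map \<Phi>"
  shows "(norm (\<Phi> (x * d) h - \<Phi> x (\<Phi> d h)))^2 \<le> (norm x)^2 * (Re (cinner h (\<Phi> (cstar d * d) h)) - (norm (\<Phi> d h))^2)"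
proof (cases "x = 0")
  case True
  thus ?thesis by (simp add: lm_zero[OF ucp_lm[OF u]])
next
  case False
  define w where "w = \<Phi> (x * d) h - \<Phi> x (\<Phi> d h)"
  define D where "D = Re (cinner h (\<Phi> (cstar d * d) h)) - (norm (\<Phi> d h))^2"
  define X where "X = norm x"
  define W where "W = (norm w)^2"
  have Xp: "X > 0" using False by (simp add: X_def)
  define t where "t = 1 / X^2"
  have tp: "t > 0" using Xp by (simp add: t_def)
  define k where "k = (-t) *\<^sub>R w"
  have A: "0 \<le> D + 2 * Re (cinner k w) + X^2 * (norm k)^2"
    using ucp_gram_aux[OF u, of h d k x] by (simp add: D_def w_def X_def)
  have "cinner k w = complex_of_real (-t) * cinner w w"
    by (simp add: k_def chilbert_scaleR_scaleC cinner_scaleC_left)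
  hence "Re (cinner k w) = - t * W" by (simp add: W_def Re_cinner_self)
  moreover have "(norm k)^2 = t^2 * W" using tp by (simp add: k_def W_def power_mult_distrib)
  ultimately have "0 \<le> D - 2 * t * W + X^2 * t^2 * W" using A by simp
  moreover have "X^2 * t^2 * W = t * W" using Xp by (simp add: t_def power2_eq_square)
  ultimately have "t * W \<le> D" by linarith
  hence "W \<le> X^2 * D" using Xp by (simp add: t_def field_simps)
  thus ?thesis by (simp add: W_def X_def D_def w_def)
qed


lemma eps_bounds:
  fixes \<Phi> \<pi> :: "'a::cstar_algebra \<Rightarrow> 'h::chilbert \<Rightarrow> 'h"
  assumes u: "ucp_map \<Phi>" and r: "unital_star_rep \<pi>" and eq: "\<And>h. \<Phi> m h = \<pi> m h" and nm: "norm m \<le> 1"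
  shows "(norm (k - \<pi> m k))^2 \<le> 2 * Re (cinner k (k - \<pi> m k))"
    and "Re (cinner k (\<Phi> (cstar m * m) k)) - (norm (\<Phi> m k))^2 \<le> 2 * Re (cinner k (k - \<pi> m k))"
proof -
  have Pk: "norm (\<pi> m k) \<le> norm k"
    using rep_contr[OF r, of m k] nm by (metis mult_le_cancel_right1 norm_ge_zero order_trans mult_right_mono mult_1)
  hence Pk2: "(norm (\<pi> m k))^2 \<le> (norm k)^2" by (simp add: power_mono)
  have e: "2 * Re (cinner k (k - \<pi> m k)) = 2 * (norm k)^2 - 2 * Re (cinner k (\<pi> m k))"
    by (simp add: cinner_diff_right Re_cinner_self)
  have d: "(norm (k - \<pi> m k))^2 = (norm k)^2 - 2 * Re (cinner k (\<pi> m k)) + (norm (\<pi> m k))^2"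
    by (rule norm_diff_sq)
  show "(norm (k - \<pi> m k))^2 \<le> 2 * Re (cinner k (k - \<pi> m k))"
    using e d Pk2 by linarith
  have f: "Re (cinner k (\<Phi> (cstar m * m) k)) \<le> (norm k)^2"
    using ucp_form1[OF u, of k m] nm
    by (metis mult_le_cancel_right1 zero_le_power2 order_trans mult_right_mono power_le_one norm_ge_zero mult_1)
  show "Re (cinner k (\<Phi> (cstar m * m) k)) - (norm (\<Phi> m k))^2 \<le> 2 * Re (cinner k (k - \<pi> m k))"
    using e d f zero_le_power2[of "norm (k - \<pi> m k)"] unfolding eq by linarith
qed


lemma rep_sandwich:
  fixes \<pi> :: "'a::cstar_algebra \<Rightarrow> 'h::chilbert \<Rightarrow> 'h"
  assumes r: "unital_star_rep \<pi>" and g: "norm g \<le> 1" and h: "norm h \<le> 1"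
  shows "cmod (cinner (\<pi> n g) (\<pi> c (\<pi> n h))) \<le> norm (cstar n * c * n)"
proof -
  have "cinner (\<pi> n g) (\<pi> c (\<pi> n h)) = cinner g (\<pi> (cstar n) (\<pi> c (\<pi> n h)))"
    by (simp add: rep_herm[OF r])
  also have "\<pi> (cstar n) (\<pi> c (\<pi> n h)) = \<pi> (cstar n * c * n) h"
    by (simp add: rep_mult[OF r])
  finally have "cmod (cinner (\<pi> n g) (\<pi> c (\<pi> n h))) = cmod (cinner g (\<pi> (cstar n * c * n) h))" by simp
  also have "\<dots> \<le> norm g * norm (\<pi> (cstar n * c * n) h)" by (rule cinner_cs)
  also have "\<dots> \<le> 1 * norm (cstar n * c * n)"
  proof (rule mult_mono)
    have "norm (cstar n * c * n) * norm h \<le> norm (cstar n * c * n)" by (rule mult_left_le[OF h norm_ge_zero])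
    thus "norm (\<pi> (cstar n * c * n) h) \<le> norm (cstar n * c * n)"
      using rep_contr[OF r, of "cstar n * c * n" h] by linarith
  qed (use g in auto)
  finally show ?thesis by simp
qed

lemma eps_pi:
  fixes \<pi> :: "'a::cstar_algebra \<Rightarrow> 'h::chilbert \<Rightarrow> 'h"
  assumes r: "unital_star_rep \<pi>" and h: "norm h \<le> 1"
  shows "2 * Re (cinner (\<pi> n h) (\<pi> n h - \<pi> m (\<pi> n h))) \<le> 2 * norm (cstar n * (1 - m) * n)"
proof -
  note L = rep_lm[OF r]
  have "\<pi> n h - \<pi> m (\<pi> n h) = \<pi> (1 - m) (\<pi> n h)" by (simp add: lm_diff[OF L] rep_one[OF r])
  hence "Re (cinner (\<pi> n h) (\<pi> n h - \<pi> m (\<pi> n h))) \<le> cmod (cinner (\<pi> n h) (\<pi> (1 - m) (\<pi> n h)))"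
    by (simp add: complex_Re_le_cmod)
  also have "\<dots> \<le> norm (cstar n * (1 - m) * n)" by (rule rep_sandwich[OF r h h])
  finally show ?thesis by simp
qed


lemma six_tri: "cmod (a + b + c + d + e + f) \<le> cmod a + cmod b + cmod c + cmod d + cmod e + cmod f"
  using norm_triangle_ineq[of "a+b+c+d+e" f] norm_triangle_ineq[of "a+b+c+d" e] norm_triangle_ineq[of "a+b+c" d]
    norm_triangle_ineq[of "a+b" c] norm_triangle_ineq[of a b] by linarith

lemma cs1: "norm (x::'h::chilbert) \<le> 1 \<Longrightarrow> cmod (cinner x y) \<le> norm y"
  using cinner_cs[of x y] mult_right_mono[of "norm x" 1 "norm y"] by simp

lemma cs1': "norm (y::'h::chilbert) \<le> 1 \<Longrightarrow> cmod (cinner x y) \<le> norm x"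
  using cinner_cs[of x y] mult_left_mono[of "norm y" 1 "norm x"] by simp

lemma main_bound:
  fixes \<Phi> \<pi> :: "'a::cstar_algebra \<Rightarrow> 'h::chilbert \<Rightarrow> 'h"
  assumes u: "ucp_map \<Phi>" and r: "unital_star_rep \<pi>" and eq: "\<And>h. \<Phi> m h = \<pi> m h"
    and nm: "norm m \<le> 1" and nn: "norm n \<le> 1" and g: "norm g \<le> 1" and h: "norm h \<le> 1"
  shows "cmod (cinner g (\<pi> (cstar n) (\<Phi> b (\<pi> n h) - \<pi> b (\<pi> n h))))
     \<le> 4 * norm b * sqrt (2 * norm (cstar n * (1 - m) * n)) + norm (cstar m * b * m) + norm (cstar n * b * n)"
proof -
  note LP = ucp_lm[OF u] note BP = lm_bop[OF LP]
  note Lr = rep_lm[OF r] note Br = lm_bop[OF Lr]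
  define N1 where "N1 = norm (cstar n * (1 - m) * n)"
  define E where "E = sqrt (2 * N1)"
  have E0: "E \<ge> 0" by (simp add: E_def N1_def)
  define g' where "g' = \<pi> n g"
  define k where "k = \<pi> n h"
  have ng': "norm g' \<le> 1" unfolding g'_def
    using rep_contr[OF r, of n g] mult_le_one[OF nn norm_ge_zero g] by linarith
  have nk: "norm k \<le> 1" unfolding k_def
    using rep_contr[OF r, of n h] mult_le_one[OF nn norm_ge_zero h] by linarith
  have nb: "norm b \<ge> 0" by simp
  have ek: "2 * Re (cinner k (k - \<pi> m k)) \<le> 2 * N1" unfolding k_def N1_def by (rule eps_pi[OF r h])
  have eg: "2 * Re (cinner g' (g' - \<pi> m g')) \<le> 2 * N1" unfolding g'_def N1_def by (rule eps_pi[OF r g])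
  have Rk: "norm (k - \<pi> m k) \<le> E"
    unfolding E_def by (rule real_le_rsqrt) (use eps_bounds(1)[OF u r eq nm, of k] ek in linarith)
  have Rg: "norm (g' - \<pi> m g') \<le> E"
    unfolding E_def by (rule real_le_rsqrt) (use eps_bounds(1)[OF u r eq nm, of g'] eg in linarith)
  have gram_b: "norm (\<Phi> (x * m) z - \<Phi> x (\<Phi> m z)) \<le> norm x * E"
    if "2 * Re (cinner z (z - \<pi> m z)) \<le> 2 * N1" for x z
  proof -
    have "(norm (\<Phi> (x * m) z - \<Phi> x (\<Phi> m z)))^2 \<le> (norm x)^2 * (Re (cinner z (\<Phi> (cstar m * m) z)) - (norm (\<Phi> m z))^2)"
      by (rule ucp_gram[OF u])
    also have "\<dots> \<le> (norm x)^2 * (2 * N1)"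
      by (rule mult_left_mono) (use eps_bounds(2)[OF u r eq nm, of z] that in auto)
    also have "\<dots> = (norm x * E)^2" using E0 by (simp add: E_def power_mult_distrib N1_def)
    finally show ?thesis by (rule power2_le_imp_le) (use E0 in simp)
  qed
  define T0 where "T0 = cinner g' (\<Phi> b k)"
  define T1 where "T1 = cinner g' (\<Phi> b (\<pi> m k))"
  define T2 where "T2 = cinner g' (\<Phi> (b * m) k)"
  define T3 where "T3 = cinner (\<pi> m g') (\<Phi> (b * m) k)"
  define T4 where "T4 = cinner g' (\<Phi> (cstar m * (b * m)) k)"
  define Q where "Q = cinner g' (\<pi> b k)"
  have nbm: "norm (b * m) \<le> norm b"
    using norm_mult_ineq[of b m] mult_left_mono[OF nm nb] by simp
  have d01: "cmod (T0 - T1) \<le> norm b * E"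
  proof -
    have "T0 - T1 = cinner g' (\<Phi> b (k - \<pi> m k))" by (simp add: T0_def T1_def bop_diff[OF BP] cinner_diff_right)
    hence "cmod (T0 - T1) \<le> norm (\<Phi> b (k - \<pi> m k))" using cs1[OF ng'] by simp
    also have "\<dots> \<le> norm b * norm (k - \<pi> m k)" by (rule ucp_contr[OF u])
    also have "\<dots> \<le> norm b * E" by (rule mult_left_mono[OF Rk nb])
    finally show ?thesis .
  qed
  have d12: "cmod (T1 - T2) \<le> norm b * E"
  proof -
    have "T1 - T2 = - cinner g' (\<Phi> (b * m) k - \<Phi> b (\<Phi> m k))" by (simp add: T1_def T2_def eq cinner_diff_right)
    hence "cmod (T1 - T2) \<le> norm (\<Phi> (b * m) k - \<Phi> b (\<Phi> m k))" using cs1[OF ng'] by simp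
    also have "\<dots> \<le> norm b * E" by (rule gram_b[OF ek])
    finally show ?thesis .
  qed
  have d23: "cmod (T2 - T3) \<le> norm b * E"
  proof -
    have "T2 - T3 = cinner (g' - \<pi> m g') (\<Phi> (b * m) k)" by (simp add: T2_def T3_def cinner_diff_left)
    hence "cmod (T2 - T3) \<le> norm (g' - \<pi> m g') * norm (\<Phi> (b * m) k)" using cinner_cs by simp
    also have "\<dots> \<le> E * norm b"
    proof (rule mult_mono[OF Rg _ E0 norm_ge_zero])
      have "norm (\<Phi> (b * m) k) \<le> norm (b * m) * norm k" by (rule ucp_contr[OF u])
      also have "\<dots> \<le> norm b * 1" by (rule mult_mono[OF nbm nk nb norm_ge_zero])
      finally show "norm (\<Phi> (b * m) k) \<le> norm b" by simp
    qed
    finally show ?thesis by (simp add: mult.commute)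
  qed
  have d34: "cmod (T3 - T4) \<le> norm b * E"
  proof -
    have a: "T3 = cinner (\<Phi> (cstar (b * m)) (\<Phi> m g')) k"
    proof -
      have "T3 = cinner (\<Phi> m g') (\<Phi> (cstar (cstar (b * m))) k)" by (simp add: T3_def eq cstar_cstar)
      also have "\<dots> = cinner (\<Phi> (cstar (b * m)) (\<Phi> m g')) k" by (rule ucp_herm[OF u])
      finally show ?thesis .
    qed
    have b: "T4 = cinner (\<Phi> (cstar (b * m) * m) g') k"
    proof -
      have "cstar (cstar (b * m) * m) = cstar m * (b * m)" by (simp add: cstar_mult cstar_cstar)
      hence "T4 = cinner g' (\<Phi> (cstar (cstar (b * m) * m)) k)" by (simp add: T4_def)
      also have "\<dots> = cinner (\<Phi> (cstar (b * m) * m) g') k" by (rule ucp_herm[OF u])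
      finally show ?thesis .
    qed
    have "T3 - T4 = - cinner (\<Phi> (cstar (b * m) * m) g' - \<Phi> (cstar (b * m)) (\<Phi> m g')) k"
      by (simp add: a b cinner_diff_left)
    hence "cmod (T3 - T4) \<le> norm (\<Phi> (cstar (b * m) * m) g' - \<Phi> (cstar (b * m)) (\<Phi> m g'))"
      using cs1'[OF nk] by simp
    also have "\<dots> \<le> norm (cstar (b * m)) * E" by (rule gram_b[OF eg])
    also have "\<dots> \<le> norm b * E" using nbm E0 by (simp add: norm_cstar mult_right_mono)
    finally show ?thesis .
  qed
  have d4: "cmod T4 \<le> norm (cstar m * b * m)"
  proof -
    have "cmod T4 \<le> norm (\<Phi> (cstar m * (b * m)) k)" unfolding T4_def by (rule cs1[OF ng'])
    also have "\<dots> \<le> norm (cstar m * (b * m)) * norm k" by (rule ucp_contr[OF u])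
    also have "\<dots> \<le> norm (cstar m * (b * m))" by (rule mult_left_le[OF nk norm_ge_zero])
    finally show ?thesis by (simp add: mult.assoc)
  qed
  have dQ: "cmod Q \<le> norm (cstar n * b * n)"
    unfolding Q_def g'_def k_def by (rule rep_sandwich[OF r g h])
  have "cinner g (\<pi> (cstar n) (\<Phi> b (\<pi> n h) - \<pi> b (\<pi> n h))) = T0 - Q"
    by (simp add: rep_herm[OF r] T0_def Q_def g'_def k_def cinner_diff_right)
  also have "\<dots> = (T0 - T1) + (T1 - T2) + (T2 - T3) + (T3 - T4) + T4 + (- Q)" by simp
  finally have "cmod (cinner g (\<pi> (cstar n) (\<Phi> b (\<pi> n h) - \<pi> b (\<pi> n h))))
     \<le> cmod (T0 - T1) + cmod (T1 - T2) + cmod (T2 - T3) + cmod (T3 - T4) + cmod T4 + cmod (- Q)"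
    using six_tri by metis
  also have "\<dots> \<le> 4 * (norm b * E) + norm (cstar m * b * m) + norm (cstar n * b * n)"
    using d01 d12 d23 d34 d4 dQ by simp
  finally show ?thesis by (simp add: E_def N1_def)
qed


lemma opnorm_le:
  assumes "\<And>h. norm h \<le> 1 \<Longrightarrow> norm (T h) \<le> B"
  shows "opnorm (T :: 'h::chilbert \<Rightarrow> 'h) \<le> B"
  unfolding opnorm_def
proof (rule cSUP_least)
  have "(0::'h) \<in> {x::'h. norm x \<le> 1}" by simp
  thus "{x::'h. norm x \<le> 1} \<noteq> {}" by blast
  show "\<And>x. x \<in> {x. norm x \<le> 1} \<Longrightarrow> norm (T x) \<le> B" using assms by simp
qed

lemma opnorm_ge0:
  assumes "\<And>h. norm h \<le> 1 \<Longrightarrow> norm (T h) \<le> B"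
  shows "0 \<le> opnorm (T :: 'h::chilbert \<Rightarrow> 'h)"
  unfolding opnorm_def
proof (rule cSUP_upper2)
  show "bdd_above ((\<lambda>x. norm (T x)) ` {x. norm x \<le> 1})"
    using assms by (auto intro!: bdd_aboveI[of _ B])
  show "(0::'h) \<in> {x. norm x \<le> 1}" by simp
  show "0 \<le> norm (T 0)" by simp
qed

lemma norm_by_inner:
  fixes v :: "'h::chilbert"
  assumes "\<And>g. norm g \<le> 1 \<Longrightarrow> cmod (cinner g v) \<le> B"
  shows "norm v \<le> B"
proof (cases "v = 0")
  case True thus ?thesis using assms[of 0] by simp
next
  case False
  define g where "g = (1 / norm v) *\<^sub>R v"
  have ng: "norm g \<le> 1" using False by (simp add: g_def)
  have "cinner g v = complex_of_real (1 / norm v) * cinner v v"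
    by (simp add: g_def chilbert_scaleR_scaleC cinner_scaleC_left)
  also have "\<dots> = complex_of_real (norm v)" using False by (simp add: cinner_self power2_eq_square)
  finally have "cmod (cinner g v) = norm v" by simp
  thus ?thesis using assms[OF ng] by simp
qed

lemma limsup_le_of_ev:
  fixes f :: "nat \<Rightarrow> real"
  assumes "\<And>e. e > 0 \<Longrightarrow> eventually (\<lambda>n. f n \<le> L + e) sequentially"
  shows "limsup (\<lambda>n. ereal (f n)) \<le> ereal L"
proof (rule ereal_le_epsilon2)
  fix e :: real assume e: "e > 0"
  show "limsup (\<lambda>n. ereal (f n)) \<le> ereal L + ereal e"
    unfolding Limsup_le_iff
  proof (intro allI impI)
    fix y assume y: "y > ereal L + ereal e"
    show "eventually (\<lambda>n. y > ereal (f n)) sequentially"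
      using assms[OF e]
    proof eventually_elim
      case (elim n)
      have y': "ereal (L + e) < y" using y by simp
      have "ereal (f n) \<le> ereal (L + e)" using elim by simp
      thus ?case using y' by (rule le_less_trans)
    qed
  qed
qed

lemma ev_of_limsup:
  fixes f :: "nat \<Rightarrow> real"
  assumes "limsup (\<lambda>n. ereal (f n)) \<le> ereal c" and "e > 0"
  shows "eventually (\<lambda>n. f n < c + e) sequentially"
proof -
  have "ereal c < ereal (c + e)" using assms(2) by simp
  hence "limsup (\<lambda>n. ereal (f n)) < ereal (c + e)" using assms(1) by (rule le_less_trans[rotated])
  from Limsup_lessD[OF this] show ?thesis by simp
qed

lemma st_add: "is_state \<psi> \<Longrightarrow> \<psi> (x + y) = \<psi> x + \<psi> y" by (simp add: is_state_def)
lemma st_scaleC: "is_state \<psi> \<Longrightarrow> \<psi> (c *\<^sub>C x) = c * \<psi> x" by (simp add: is_state_def)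
lemma st_pos: "is_state \<psi> \<Longrightarrow> Im (\<psi> (cstar b * b)) = 0 \<and> Re (\<psi> (cstar b * b)) \<ge> 0" by (simp add: is_state_def)
lemma st_one: "is_state \<psi> \<Longrightarrow> \<psi> 1 = 1" by (simp add: is_state_def)
lemma st_diff: "is_state \<psi> \<Longrightarrow> \<psi> (x - y) = \<psi> x - \<psi> y"
  using st_add[of \<psi> "x - y" y] by simp

lemma st_form: "is_state (\<psi>::'a::cstar_algebra \<Rightarrow> complex) \<Longrightarrow>
   Re (\<psi> (cstar (x * b) * (x * b))) \<le> (norm x)^2 * Re (\<psi> (cstar b * b))"
  by (rule form_bound_gen) (auto simp: st_add st_scaleC st_pos)

lemma gns_lower:
  assumes st: "is_state (\<psi>::'a::cstar_algebra \<Rightarrow> complex)"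
  shows "sqrt (Re (\<psi> (cstar x * x))) \<le> gns_norm \<psi> x"
  unfolding gns_norm_def
proof (rule cSUP_upper2)
  show "bdd_above ((\<lambda>b. sqrt (Re (\<psi> (cstar (x * b) * (x * b))))) ` {b. Re (\<psi> (cstar b * b)) \<le> 1})"
  proof (rule bdd_aboveI[of _ "norm x"], clarify)
    fix b assume b: "Re (\<psi> (cstar b * b)) \<le> 1"
    have "Re (\<psi> (cstar (x * b) * (x * b))) \<le> (norm x)^2 * 1"
      using st_form[OF st, of x b] mult_left_mono[OF b zero_le_power2[of "norm x"]] by linarith
    hence "sqrt (Re (\<psi> (cstar (x * b) * (x * b)))) \<le> sqrt ((norm x)^2)" by (simp only: mult_1_right real_sqrt_le_mono)
    thus "sqrt (Re (\<psi> (cstar (x * b) * (x * b)))) \<le> norm x" by simp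
  qed
  show "1 \<in> {b. Re (\<psi> (cstar b * b)) \<le> 1}" using st by (simp add: st_one)
  show "sqrt (Re (\<psi> (cstar x * x))) \<le> sqrt (Re (\<psi> (cstar (x * 1) * (x * 1))))" by simp
qed


lemma char_props:
  assumes "characteristic_sequence \<psi> \<Delta>"
  shows "\<And>n. norm (\<Delta> n) = 1" and "(\<lambda>n. \<psi> (\<Delta> n)) \<longlonglongrightarrow> 1"
    and "\<And>a. limsup (\<lambda>n. ereal (norm (cstar (\<Delta> n) * a * \<Delta> n))) \<le> ereal (cmod (\<psi> a))"
  using assms unfolding characteristic_sequence_def by blast+

lemma part2:
  fixes S :: "'a::cstar_algebra set"
    and \<pi> \<Phi> :: "'a \<Rightarrow> 'h::chilbert \<Rightarrow> 'h"
    and \<psi> :: "'a \<Rightarrow> complex"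
    and \<Delta> :: "nat \<Rightarrow> 'a"
  assumes r: "unital_star_rep \<pi>"
    and u: "ucp_map \<Phi>"
    and eqS: "\<forall>s\<in>S. \<Phi> s = \<pi> s"
    and st: "is_state \<psi>"
    and ch: "characteristic_sequence \<psi> \<Delta>"
    and inS: "\<forall>n. \<Delta> n \<in> S"
    and e: "e > 0"
  shows "eventually (\<lambda>n. \<forall>g h. norm g \<le> 1 \<longrightarrow> norm h \<le> 1 \<longrightarrow>
      cmod (cinner g (\<pi> (cstar (\<Delta> n)) (\<Phi> a (\<pi> (\<Delta> n) h) - \<pi> a (\<pi> (\<Delta> n) h)))) \<le> e) sequentially"
proof -
  note nD = char_props(1)[OF ch] and conv = char_props(2)[OF ch] and ls = char_props(3)[OF ch]
  note LP = ucp_lm[OF u] and Lr = rep_lm[OF r]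
  define b where "b = a - \<psi> a *\<^sub>C 1"
  have psib: "\<psi> b = 0" by (simp add: b_def st_diff[OF st] st_scaleC[OF st] st_one[OF st])
  have diffeq: "\<Phi> b k - \<pi> b k = \<Phi> a k - \<pi> a k" for k
    by (simp add: b_def lm_diff[OF LP] lm_diff[OF Lr] lm_scaleC[OF LP] lm_scaleC[OF Lr] ucp_one[OF u] rep_one[OF r])
  define B where "B = norm b"
  have B0: "B \<ge> 0" by (simp add: B_def)
  define q where "q = e / (12 * (B + 1))"
  have q0: "q > 0" using e B0 by (simp add: q_def)
  define \<delta> where "\<delta> = q^2 / 2"
  have \<delta>0: "\<delta> > 0" using q0 by (simp add: \<delta>_def)
  have ev1: "eventually (\<lambda>m. cmod (1 - \<psi> (\<Delta> m)) < \<delta>) sequentially"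
  proof -
    have "eventually (\<lambda>m. dist (\<psi> (\<Delta> m)) 1 < \<delta>) sequentially"
      using conv \<delta>0 by (rule tendstoD)
    thus ?thesis by eventually_elim (simp add: dist_norm norm_minus_commute)
  qed
  have ev2: "eventually (\<lambda>m. norm (cstar (\<Delta> m) * b * \<Delta> m) < 0 + e / 3) sequentially"
    using ev_of_limsup[of "\<lambda>m. norm (cstar (\<Delta> m) * b * \<Delta> m)" 0 "e/3"] ls[of b] psib e by simp
  obtain m where m1: "cmod (1 - \<psi> (\<Delta> m)) < \<delta>" and m2: "norm (cstar (\<Delta> m) * b * \<Delta> m) < e / 3"
  proof -
    from eventually_conj[OF ev1 ev2] obtain N where "\<forall>n\<ge>N. cmod (1 - \<psi> (\<Delta> n)) < \<delta> \<and> norm (cstar (\<Delta> n) * b * \<Delta> n) < 0 + e / 3"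
      unfolding eventually_sequentially by blast
    thus ?thesis using that by auto
  qed
  have psi1m: "\<psi> (1 - \<Delta> m) = 1 - \<psi> (\<Delta> m)" by (simp add: st_diff[OF st] st_one[OF st])
  have ev3: "eventually (\<lambda>n. norm (cstar (\<Delta> n) * (1 - \<Delta> m) * \<Delta> n) < cmod (1 - \<psi> (\<Delta> m)) + (\<delta> - cmod (1 - \<psi> (\<Delta> m)))) sequentially"
    using ev_of_limsup[of "\<lambda>n. norm (cstar (\<Delta> n) * (1 - \<Delta> m) * \<Delta> n)" "cmod (1 - \<psi> (\<Delta> m))" "\<delta> - cmod (1 - \<psi> (\<Delta> m))"]
      ls[of "1 - \<Delta> m"] psi1m m1 by simp
  have ev4: "eventually (\<lambda>n. norm (cstar (\<Delta> n) * b * \<Delta> n) < 0 + e / 3) sequentially"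
    using ev_of_limsup[of "\<lambda>m. norm (cstar (\<Delta> m) * b * \<Delta> m)" 0 "e/3"] ls[of b] psib e by simp
  show ?thesis
    using eventually_conj[OF ev3 ev4]
  proof eventually_elim
    case (elim n)
    hence n1: "norm (cstar (\<Delta> n) * (1 - \<Delta> m) * \<Delta> n) < \<delta>" and n2: "norm (cstar (\<Delta> n) * b * \<Delta> n) < e / 3" by simp_all
    have sq: "sqrt (2 * norm (cstar (\<Delta> n) * (1 - \<Delta> m) * \<Delta> n)) \<le> q"
    proof -
      have "sqrt (2 * norm (cstar (\<Delta> n) * (1 - \<Delta> m) * \<Delta> n)) \<le> sqrt (2 * \<delta>)"
        using n1 by (simp add: real_sqrt_le_mono)
      also have "sqrt (2 * \<delta>) = q" using q0 by (simp add: \<delta>_def)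
      finally show ?thesis .
    qed
    have "4 * B * sqrt (2 * norm (cstar (\<Delta> n) * (1 - \<Delta> m) * \<Delta> n)) \<le> 4 * B * q"
      using sq B0 by (simp add: mult_left_mono)
    also have "\<dots> \<le> 4 * (B + 1) * q" using q0 by (simp add: mult_right_mono)
    also have "\<dots> = e / 3"
    proof -
      have nz: "B + 1 \<noteq> 0" using B0 by simp
      show ?thesis unfolding q_def using nz by (simp add: field_simps)
    qed
    finally have t1: "4 * B * sqrt (2 * norm (cstar (\<Delta> n) * (1 - \<Delta> m) * \<Delta> n)) \<le> e / 3" .
    show ?case
    proof (intro allI impI)
      fix g h :: 'h assume g: "norm g \<le> 1" and h: "norm h \<le> 1"
      have eqm: "\<And>k. \<Phi> (\<Delta> m) k = \<pi> (\<Delta> m) k" using eqS inS by simp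
      have "cmod (cinner g (\<pi> (cstar (\<Delta> n)) (\<Phi> a (\<pi> (\<Delta> n) h) - \<pi> a (\<pi> (\<Delta> n) h))))
          = cmod (cinner g (\<pi> (cstar (\<Delta> n)) (\<Phi> b (\<pi> (\<Delta> n) h) - \<pi> b (\<pi> (\<Delta> n) h))))"
        by (simp only: diffeq)
      also have "\<dots> \<le> 4 * norm b * sqrt (2 * norm (cstar (\<Delta> n) * (1 - \<Delta> m) * \<Delta> n))
          + norm (cstar (\<Delta> m) * b * \<Delta> m) + norm (cstar (\<Delta> n) * b * \<Delta> n)"
        by (rule main_bound[OF u r eqm _ _ g h]) (simp_all add: nD)
      also have "\<dots> \<le> e" using t1 m2 n2 by (simp add: B_def)
      finally show "cmod (cinner g (\<pi> (cstar (\<Delta> n)) (\<Phi> a (\<pi> (\<Delta> n) h) - \<pi> a (\<pi> (\<Delta> n) h)))) \<le> e" .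
    qed
  qed
qed


lemma part1_s:
  fixes S :: "'a::cstar_algebra set"
    and \<pi> \<Phi> :: "'a \<Rightarrow> 'h::chilbert \<Rightarrow> 'h"
    and \<psi> :: "'a \<Rightarrow> complex"
    and \<Delta> :: "nat \<Rightarrow> 'a"
  assumes r: "unital_star_rep \<pi>"
    and u: "ucp_map \<Phi>"
    and eqS: "\<forall>s\<in>S. \<Phi> s = \<pi> s"
    and st: "is_state \<psi>"
    and ch: "characteristic_sequence \<psi> \<Delta>"
    and inS: "\<forall>n. \<Delta> n \<in> S"
    and sS: "s \<in> S"
  shows "limsup (\<lambda>n. ereal (opnorm (\<lambda>h. \<Phi> a (\<pi> (\<Delta> n) h) - \<pi> a (\<pi> (\<Delta> n) h))))
     \<le> ereal (2 * sqrt (Re (\<psi> (cstar (a - s) * (a - s)))))"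
proof (rule limsup_le_of_ev)
  fix e :: real assume e: "e > 0"
  note nD = char_props(1)[OF ch] and ls = char_props(3)[OF ch]
  note LP = ucp_lm[OF u] and Lr = rep_lm[OF r]
  define x where "x = a - s"
  define c where "c = cstar x * x"
  define R where "R = Re (\<psi> c)"
  have R0: "R \<ge> 0" and cR: "cmod (\<psi> c) = R"
    using st_pos[OF st, of x] by (auto simp: R_def c_def cmod_eq_Re)
  define \<epsilon> where "\<epsilon> = (e / 4)^2"
  have \<epsilon>0: "\<epsilon> > 0" using e by (simp add: \<epsilon>_def)
  have evA: "eventually (\<lambda>n. \<forall>g h. norm g \<le> 1 \<longrightarrow> norm h \<le> 1 \<longrightarrow>
      cmod (cinner g (\<pi> (cstar (\<Delta> n)) (\<Phi> c (\<pi> (\<Delta> n) h) - \<pi> c (\<pi> (\<Delta> n) h)))) \<le> \<epsilon>) sequentially"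
    by (rule part2[OF r u eqS st ch inS \<epsilon>0])
  have evB: "eventually (\<lambda>n. norm (cstar (\<Delta> n) * c * \<Delta> n) < R + \<epsilon>) sequentially"
    using ev_of_limsup[OF ls[of c] \<epsilon>0] unfolding cR .
  show "eventually (\<lambda>n. opnorm (\<lambda>h. \<Phi> a (\<pi> (\<Delta> n) h) - \<pi> a (\<pi> (\<Delta> n) h)) \<le> 2 * sqrt (Re (\<psi> (cstar (a - s) * (a - s)))) + e) sequentially"
    using eventually_conj[OF evA evB]
  proof eventually_elim
    case (elim n)
    hence A: "\<And>g h. norm g \<le> 1 \<Longrightarrow> norm h \<le> 1 \<Longrightarrow>
      cmod (cinner g (\<pi> (cstar (\<Delta> n)) (\<Phi> c (\<pi> (\<Delta> n) h) - \<pi> c (\<pi> (\<Delta> n) h)))) \<le> \<epsilon>"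
      and NB: "norm (cstar (\<Delta> n) * c * \<Delta> n) < R + \<epsilon>" by auto
    define N where "N = norm (cstar (\<Delta> n) * c * \<Delta> n)"
    have N0: "N \<ge> 0" by (simp add: N_def)
    have bound: "norm (\<Phi> a (\<pi> (\<Delta> n) h) - \<pi> a (\<pi> (\<Delta> n) h)) \<le> 2 * sqrt R + e" if h: "norm h \<le> 1" for h
    proof -
      define k where "k = \<pi> (\<Delta> n) h"
      have nxD: "norm (x * \<Delta> n) = sqrt N"
      proof -
        have "cstar (x * \<Delta> n) * (x * \<Delta> n) = cstar (\<Delta> n) * c * \<Delta> n"
          by (simp add: c_def cstar_mult mult.assoc)
        hence "(norm (x * \<Delta> n))^2 = N" using cstar_identity[of "x * \<Delta> n"] by (simp add: N_def)
        thus ?thesis by (simp add: real_sqrt_unique[symmetric])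
      qed
      have i: "norm (\<pi> x k) \<le> sqrt N"
      proof -
        have "norm (\<pi> x k) = norm (\<pi> (x * \<Delta> n) h)" by (simp add: k_def rep_mult[OF r])
        also have "\<dots> \<le> norm (x * \<Delta> n) * norm h" by (rule rep_contr[OF r])
        also have "\<dots> \<le> norm (x * \<Delta> n)" by (rule mult_left_le[OF h norm_ge_zero])
        finally show ?thesis by (simp add: nxD)
      qed
      have ii: "norm (\<Phi> x k) \<le> sqrt (\<epsilon> + N)"
      proof -
        have "(norm (\<Phi> x k))^2 \<le> Re (cinner k (\<Phi> c k))" unfolding c_def by (rule ucp_schwarz[OF u])
        also have "\<dots> = Re (cinner k (\<Phi> c k - \<pi> c k)) + Re (cinner k (\<pi> c k))"
          by (simp add: cinner_diff_right)
        also have "Re (cinner k (\<Phi> c k - \<pi> c k)) \<le> \<epsilon>"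
        proof -
          have "cinner k (\<Phi> c k - \<pi> c k) = cinner h (\<pi> (cstar (\<Delta> n)) (\<Phi> c (\<pi> (\<Delta> n) h) - \<pi> c (\<pi> (\<Delta> n) h)))"
            by (simp add: k_def rep_herm[OF r])
          hence "Re (cinner k (\<Phi> c k - \<pi> c k)) \<le> cmod (cinner h (\<pi> (cstar (\<Delta> n)) (\<Phi> c (\<pi> (\<Delta> n) h) - \<pi> c (\<pi> (\<Delta> n) h))))"
            by (simp add: complex_Re_le_cmod)
          also have "\<dots> \<le> \<epsilon>" by (rule A[OF h h])
          finally show ?thesis .
        qed
        also have "Re (cinner k (\<pi> c k)) \<le> N"
        proof -
          have "Re (cinner k (\<pi> c k)) \<le> cmod (cinner (\<pi> (\<Delta> n) h) (\<pi> c (\<pi> (\<Delta> n) h)))"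
            by (simp add: k_def complex_Re_le_cmod)
          also have "\<dots> \<le> N" unfolding N_def by (rule rep_sandwich[OF r h h])
          finally show ?thesis .
        qed
        finally have "(norm (\<Phi> x k))^2 \<le> \<epsilon> + N" by simp
        thus ?thesis by (rule real_le_rsqrt)
      qed
      have iii: "\<Phi> a k - \<pi> a k = \<Phi> x k - \<pi> x k"
      proof -
        have "a = x + s" by (simp add: x_def)
        hence "\<Phi> a k - \<pi> a k = (\<Phi> x k + \<Phi> s k) - (\<pi> x k + \<pi> s k)"
          by (simp add: lm_add[OF LP] lm_add[OF Lr])
        also have "\<Phi> s k = \<pi> s k" using eqS sS by simp
        finally show ?thesis by simp
      qed
      have "norm (\<Phi> a k - \<pi> a k) \<le> norm (\<Phi> x k) + norm (\<pi> x k)"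
        unfolding iii by (rule norm_triangle_ineq4)
      also have "\<dots> \<le> sqrt (\<epsilon> + N) + sqrt N" using i ii by simp
      also have "\<dots> \<le> sqrt (R + 2 * \<epsilon>) + sqrt (R + \<epsilon>)"
      proof (rule add_mono)
        show "sqrt (\<epsilon> + N) \<le> sqrt (R + 2 * \<epsilon>)" by (rule real_sqrt_le_mono) (use NB in \<open>simp add: N_def\<close>)
        show "sqrt N \<le> sqrt (R + \<epsilon>)" by (rule real_sqrt_le_mono) (use NB in \<open>simp add: N_def\<close>)
      qed
      also have "\<dots> \<le> (sqrt R + sqrt (2 * \<epsilon>)) + (sqrt R + sqrt \<epsilon>)"
        by (rule add_mono; rule sqrt_add_le_add_sqrt) (use R0 \<epsilon>0 in simp_all)
      also have "sqrt \<epsilon> = e / 4" using e by (simp add: \<epsilon>_def)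
      also have "sqrt (2 * \<epsilon>) \<le> e / 2"
      proof -
        have "2 * \<epsilon> \<le> (e / 2)^2" by (simp add: \<epsilon>_def power_divide)
        hence "sqrt (2 * \<epsilon>) \<le> sqrt ((e/2)^2)" by (rule real_sqrt_le_mono)
        thus ?thesis using e by simp
      qed
      finally have "norm (\<Phi> a k - \<pi> a k) \<le> 2 * sqrt R + (e / 2 + e / 4)" by simp
      thus ?thesis using e by (simp add: k_def)
    qed
    show ?case unfolding R_def c_def x_def
      by (rule opnorm_le) (use bound in \<open>simp add: R_def c_def x_def\<close>)
  qed
qed


theorem theorem5p2:
  fixes S :: "'a::cstar_algebra set"
    and \<pi> \<Phi> :: "'a \<Rightarrow> 'h::chilbert \<Rightarrow> 'h"
    and \<psi> :: "'a \<Rightarrow> complex"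
    and \<Delta> :: "nat \<Rightarrow> 'a"
  assumes "operator_system S"
    and "unital_star_rep \<pi>"
    and "ucp_map \<Phi>"
    and "\<forall>s\<in>S. \<Phi> s = \<pi> s"
    and "is_state \<psi>"
    and "characteristic_sequence \<psi> \<Delta>"
    and "\<forall>n. \<Delta> n \<in> S"
  shows "\<forall>a. limsup (\<lambda>n. ereal (opnorm (\<lambda>h. \<Phi> a (\<pi> (\<Delta> n) h) - \<pi> a (\<pi> (\<Delta> n) h))))
              \<le> ereal (2 * gns_dist \<psi> S a)
          \<and> (\<lambda>n. opnorm (\<lambda>h. \<pi> (cstar (\<Delta> n)) (\<Phi> a (\<pi> (\<Delta> n) h) - \<pi> a (\<pi> (\<Delta> n) h))))
              \<longlonglongrightarrow> 0"
proof
  fix a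
  note os = assms(1) and r = assms(2) and u = assms(3) and eqS = assms(4) and st = assms(5)
    and ch = assms(6) and inS = assms(7)
  let ?g = "\<lambda>s. gns_norm \<psi> (a - s)"
  have S1: "1 \<in> S" using os by (simp add: operator_system_def)
  have gn0: "?g s \<ge> 0" for s
    using gns_lower[OF st, of "a - s"] real_sqrt_ge_zero[of "Re (\<psi> (cstar (a - s) * (a - s)))"]
      st_pos[OF st, of "a - s"] by linarith
  have bdd: "bdd_below (?g ` S)" by (rule bdd_belowI[of _ 0]) (auto simp: gn0)
  have Sne: "S \<noteq> {}" using S1 by blast
  have L1: "limsup (\<lambda>n. ereal (opnorm (\<lambda>h. \<Phi> a (\<pi> (\<Delta> n) h) - \<pi> a (\<pi> (\<Delta> n) h)))) \<le> ereal (2 * ?g s)"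
    if sS: "s \<in> S" for s
  proof -
    have "limsup (\<lambda>n. ereal (opnorm (\<lambda>h. \<Phi> a (\<pi> (\<Delta> n) h) - \<pi> a (\<pi> (\<Delta> n) h))))
       \<le> ereal (2 * sqrt (Re (\<psi> (cstar (a - s) * (a - s)))))"
      by (rule part1_s[OF r u eqS st ch inS sS])
    also have "\<dots> \<le> ereal (2 * ?g s)" using gns_lower[OF st, of "a - s"] by simp
    finally show ?thesis .
  qed
  show "limsup (\<lambda>n. ereal (opnorm (\<lambda>h. \<Phi> a (\<pi> (\<Delta> n) h) - \<pi> a (\<pi> (\<Delta> n) h))))
              \<le> ereal (2 * gns_dist \<psi> S a)
          \<and> (\<lambda>n. opnorm (\<lambda>h. \<pi> (cstar (\<Delta> n)) (\<Phi> a (\<pi> (\<Delta> n) h) - \<pi> a (\<pi> (\<Delta> n) h))))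
              \<longlonglongrightarrow> 0"
  proof
    show "limsup (\<lambda>n. ereal (opnorm (\<lambda>h. \<Phi> a (\<pi> (\<Delta> n) h) - \<pi> a (\<pi> (\<Delta> n) h))))
              \<le> ereal (2 * gns_dist \<psi> S a)"
    proof (rule ereal_le_epsilon2)
      fix e :: real assume e: "e > 0"
      have "(INF s\<in>S. ?g s) < (INF s\<in>S. ?g s) + e / 2" using e by simp
      then obtain s where sS: "s \<in> S" and gs: "?g s < (INF s\<in>S. ?g s) + e / 2"
        using cINF_less_iff[OF Sne bdd] by blast
      have "limsup (\<lambda>n. ereal (opnorm (\<lambda>h. \<Phi> a (\<pi> (\<Delta> n) h) - \<pi> a (\<pi> (\<Delta> n) h)))) \<le> ereal (2 * ?g s)"
        by (rule L1[OF sS])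
      also have "\<dots> \<le> ereal (2 * gns_dist \<psi> S a) + ereal e"
        using gs by (simp add: gns_dist_def)
      finally show "limsup (\<lambda>n. ereal (opnorm (\<lambda>h. \<Phi> a (\<pi> (\<Delta> n) h) - \<pi> a (\<pi> (\<Delta> n) h))))
          \<le> ereal (2 * gns_dist \<psi> S a) + ereal e" .
    qed
    show "(\<lambda>n. opnorm (\<lambda>h. \<pi> (cstar (\<Delta> n)) (\<Phi> a (\<pi> (\<Delta> n) h) - \<pi> a (\<pi> (\<Delta> n) h)))) \<longlonglongrightarrow> 0"
    proof (rule tendstoI)
      fix e :: real assume e: "e > 0"
      have e2: "e / 2 > 0" using e by simp
      show "eventually (\<lambda>n. dist (opnorm (\<lambda>h. \<pi> (cstar (\<Delta> n)) (\<Phi> a (\<pi> (\<Delta> n) h) - \<pi> a (\<pi> (\<Delta> n) h)))) 0 < e) sequentially"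
        using part2[OF r u eqS st ch inS e2, of a]
      proof eventually_elim
        case (elim n)
        have nb: "norm (\<pi> (cstar (\<Delta> n)) (\<Phi> a (\<pi> (\<Delta> n) h) - \<pi> a (\<pi> (\<Delta> n) h))) \<le> e / 2"
          if h: "norm h \<le> 1" for h
          by (rule norm_by_inner) (use elim h in auto)
        have "opnorm (\<lambda>h. \<pi> (cstar (\<Delta> n)) (\<Phi> a (\<pi> (\<Delta> n) h) - \<pi> a (\<pi> (\<Delta> n) h))) \<le> e / 2"
          by (rule opnorm_le) (rule nb)
        moreover have "0 \<le> opnorm (\<lambda>h. \<pi> (cstar (\<Delta> n)) (\<Phi> a (\<pi> (\<Delta> n) h) - \<pi> a (\<pi> (\<Delta> n) h)))"
          by (rule opnorm_ge0) (rule nb)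
        ultimately show ?case using e by simp
      qed
    qed
  qed
qed

end
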